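(* For all integers $v\geq 1$ and $L\geq 0$, \[ \frac{1-q^3}{1-q}\sum_{n_1,\ldots,n_v\geq 0} \frac{q^{\sum_{i=1}^v (N_i+2)N_i+n_v}}{(q)_{n_1}\cdots(q)_{n_{v-1}}(q)_{2n_v+2}}\,\frac{(-1;q^3)_{n_v}}{(-1;q)_{n_v}}\,(1-q^{1+n_v})\,\frac{(q)_{2L}}{(q)_{L-1-N_1}} =\sum_{j=-\infty}^{\infty}\left(\frac{j}{3}\right) q^{\frac{(2v+1)j^2-3j}{2}-(v-1)} {2L \brack L+j}_q, \] where $N_i=n_i+n_{i+1}+\cdots+n_v$ for $i=1,\ldots,v$ (for $v=1$ the product $(q)_{n_1}\cdots(q)_{n_{v-1}}$ is empty).
   Context: For a variable $a$ and integer $n\ge 0$, $(a;q)_n=(1-a)(1-aq)\cdots(1-aq^{n-1})$, and $(q)_n=(q;q)_n$; by convention $1/(q)_n=0$ for negative integers $n$. The $q$-binomial coefficient is ${A \brack B}_q=\frac{(q;q)_A}{(q;q)_B(q;q)_{A-B}}$ if $0\le B\le A$ are integers, and $0$ otherwise. $\left(\frac{j}{3}\right)$ is the Legendre symbol modulo 3: it equals $1$ if $j\equiv 1 \pmod 3$, $-1$ if $j\equiv -1\pmod 3$, and $0$ if $3\mid j$. *)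

theory Defs
  imports "HOL-Analysis.Analysis" "HOL-Number_Theory.Number_Theory"
begin

definition qpoch :: "complex \<Rightarrow> complex \<Rightarrow> nat \<Rightarrow> complex" where
  "qpoch a q n = (\<Prod>k<n. 1 - a * q ^ k)"

definition qfact_inv :: "complex \<Rightarrow> int \<Rightarrow> complex" where
  "qfact_inv q m = (if m < 0 then 0 else 1 / qpoch q q (nat m))"

definition qbinom :: "complex \<Rightarrow> int \<Rightarrow> int \<Rightarrow> complex" where
  "qbinom q A B = (if 0 \<le> B \<and> B \<le> A
     then qpoch q q (nat A) / (qpoch q q (nat B) * qpoch q q (nat (A - B))) else 0)"

end

theory Submission
  imports Defs
begin

lemma qpoch_Suc: "qpoch a q (Suc n) = qpoch a q n * (1 - a * q ^ n)"
  by (simp add: qpoch_def)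

lemma pow_lt1: assumes "norm (q::complex) < 1" shows "norm (q ^ Suc k) < 1"
proof -
  have "norm q ^ k \<le> 1" using assms by (simp add: power_le_one)
  then have "norm q * norm q ^ k \<le> norm q" using assms
    by (simp add: mult_left_le)
  moreover have "norm (q ^ Suc k) = norm q * norm q ^ k" by (simp add: norm_mult norm_power)
  ultimately show ?thesis using assms by linarith
qed

lemma qpoch_nz: assumes "norm q < 1" shows "qpoch q q n \<noteq> 0"
proof -
  have "1 - q * q ^ k \<noteq> 0" for k
  proof
    assume "1 - q * q ^ k = 0"
    then have "q ^ Suc k = 1" by simp
    with pow_lt1[OF assms, of k] show False by simp
  qed
  then show ?thesis by (simp add: qpoch_def)
qed

lemma one_minus_pow_nz: assumes "norm (q::complex) < 1" shows "1 - q ^ Suc k \<noteq> 0"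
  using pow_lt1[OF assms, of k] by auto

abbreviation ip where "ip \<equiv> qfact_inv"

lemma ip_neg: "m < 0 \<Longrightarrow> qfact_inv q m = 0"
  by (simp add: qfact_inv_def)

lemma ip_nat: "qfact_inv q (int n) = 1 / qpoch q q n"
  by (simp add: qfact_inv_def)

context fixes q :: complex assumes q1: "norm q < 1"
begin



lemma ip_down: "ip q (int n) * (1 - q ^ n) = ip q (int n - 1)"
proof (cases n)
  case 0 then show ?thesis by (simp add: qfact_inv_def)
next
  case (Suc k)
  have a: "ip q (int (Suc k)) = 1/(qpoch q q k * (1 - q*q^k))"
    using ip_nat[of q "Suc k"] by (simp only: qpoch_Suc)
  have b: "ip q (int n - 1) = 1/qpoch q q k" using Suc ip_nat[of q k] by simp
  have c: "1 - q*q^k \<noteq> 0" using one_minus_pow_nz[OF q1, of k] by simp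
  show ?thesis unfolding b unfolding Suc a using qpoch_nz[OF q1, of k] c
    by (simp add: field_simps)
qed

lemma K_step:
  "(1 - q^(Suc m)) * (\<Sum>i=0..Suc m. q^(i*i + c*i) * ip q (int (Suc m) - int i) * ip q (int i) * ip q (int c + int i))
   = (\<Sum>i=0..m. q^(i*i + (Suc c)*i) * ip q (int m - int i) * ip q (int i) * ip q (int (Suc c) + int i))"
proof -
  define A where "A i = q^(i*i + c*i + i) * ip q (int m - int i) * ip q (int i) * ip q (int c + int i)" for i
  define B where "B i = q^(i*i + c*i) * ip q (int (Suc m) - int i) * ip q (int i - 1) * ip q (int c + int i)" for i
  have split: "(1 - q^(Suc m)) * (q^(i*i + c*i) * ip q (int (Suc m) - int i) * ip q (int i) * ip q (int c + int i))
      = A i + B i" if "i \<le> Suc m" for i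
  proof -
    have e: "1 - q^(Suc m) = q^i * (1 - q^(Suc m - i)) + (1 - q^i)"
      using that by (simp add: algebra_simps flip: power_add)
    have d1: "ip q (int (Suc m) - int i) * (1 - q^(Suc m - i)) = ip q (int m - int i)"
      using ip_down[of "Suc m - i"] that by (simp add: of_nat_diff)
    have d2: "ip q (int i) * (1 - q^i) = ip q (int i - 1)" by (rule ip_down)
    show ?thesis unfolding A_def B_def e
      by (simp add: algebra_simps power_add flip: d1 d2)
  qed
  have "(1 - q^(Suc m)) * (\<Sum>i=0..Suc m. q^(i*i + c*i) * ip q (int (Suc m) - int i) * ip q (int i) * ip q (int c + int i))
      = (\<Sum>i=0..Suc m. (1 - q^(Suc m)) * (q^(i*i + c*i) * ip q (int (Suc m) - int i) * ip q (int i) * ip q (int c + int i)))"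
    by (simp only: sum_distrib_left)
  also have "\<dots> = (\<Sum>i=0..Suc m. A i + B i)"
    by (rule sum.cong[OF refl], rule split) simp
  also have "\<dots> = (\<Sum>i=0..Suc m. A i) + (\<Sum>i=0..Suc m. B i)" by (simp add: sum.distrib)
  also have "(\<Sum>i=0..Suc m. A i) = (\<Sum>i=0..m. A i)"
    by (simp add: A_def ip_neg)
  also have "(\<Sum>i=0..Suc m. B i) = (\<Sum>i=0..m. B (Suc i))"
    by (subst sum.atLeast0_atMost_Suc_shift) (simp add: B_def ip_neg)
  also have "(\<Sum>i=0..m. A i) + (\<Sum>i=0..m. B (Suc i)) = (\<Sum>i=0..m. A i + B (Suc i))"
    by (simp add: sum.distrib)
  also have "\<dots> = (\<Sum>i=0..m. q^(i*i + (Suc c)*i) * ip q (int m - int i) * ip q (int i) * ip q (int (Suc c) + int i))"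
  proof (rule sum.cong[OF refl])
    fix i
    have d3: "ip q (int (Suc c) + int i) * (1 - q^(Suc c + i)) = ip q (int c + int i)"
      using ip_down[of "Suc c + i"] by (simp add: add.assoc)
    have ex: "Suc i * Suc i + c * Suc i = (i*i + c*i + i) + (Suc c + i)" by (simp add: algebra_simps)
    show "A i + B (Suc i) = q^(i*i + (Suc c)*i) * ip q (int m - int i) * ip q (int i) * ip q (int (Suc c) + int i)"
      unfolding A_def B_def ex
      by (simp add: algebra_simps power_add flip: d3)
  qed
  finally show ?thesis .
qed

lemma K_lemma:
  "(\<Sum>i=0..m. q^(i*i + c*i) * ip q (int m - int i) * ip q (int i) * ip q (int c + int i)) = ip q (int m) * ip q (int c + int m)"
proof (induction m arbitrary: c)
  case 0 then show ?case by (simp add: qfact_inv_def qpoch_def)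
next
  case (Suc m)
  have nz: "1 - q^(Suc m) \<noteq> 0" by (rule one_minus_pow_nz[OF q1])
  have h: "ip q (int (Suc m)) * (1 - q^Suc m) = ip q (int m)" using ip_down[of "Suc m"] by simp
  have e: "int c + int (Suc m) = int (Suc c) + int m" by simp
  have r: "(1 - q^(Suc m)) * (ip q (int (Suc m)) * ip q (int c + int (Suc m))) = ip q (int m) * ip q (int (Suc c) + int m)"
    unfolding e h[symmetric] by (simp only: ac_simps)
  have "(1 - q^(Suc m)) * (\<Sum>i=0..Suc m. q^(i*i + c*i) * ip q (int (Suc m) - int i) * ip q (int i) * ip q (int c + int i))
     = (1 - q^(Suc m)) * (ip q (int (Suc m)) * ip q (int c + int (Suc m)))"
    unfolding K_step Suc r ..
  then show ?case using nz by simp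
qed

end

context fixes q :: complex assumes q1: "norm q < 1"
begin

lemma Ker_pos:
  "(\<Sum>k=0..n. q^(k*k+2*k) * ip q (int n - int k) * ip q (int k - int r) * ip q (int k + int r + 2))
   = q^(r*r+2*r) * ip q (int n - int r) * ip q (int n + int r + 2)"
proof (cases "n < r")
  case True
  have "q^(k*k+2*k) * ip q (int n - int k) * ip q (int k - int r) * ip q (int k + int r + 2) = 0"
    if "k \<in> {0..n}" for k
  proof -
    have "int k - int r < 0" using that True by auto
    then show ?thesis by (simp add: ip_neg)
  qed
  then have "(\<Sum>k=0..n. q^(k*k+2*k) * ip q (int n - int k) * ip q (int k - int r) * ip q (int k + int r + 2)) = 0"
    by (intro sum.neutral) blast
  moreover have "ip q (int n - int r) = 0" using True by (simp add: ip_neg)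
  ultimately show ?thesis by simp
next
  case False
  then obtain m where n: "n = r + m" by (metis le_add_diff_inverse not_less)
  define f where "f k = q^(k*k+2*k) * ip q (int n - int k) * ip q (int k - int r) * ip q (int k + int r + 2)" for k
  have "(\<Sum>k=0..n. f k) = (\<Sum>k=r..n. f k)"
    by (rule sum.mono_neutral_right) (auto simp: f_def ip_neg)
  also have "\<dots> = (\<Sum>i=0..m. f (i + r))"
    using sum.shift_bounds_cl_nat_ivl[of f 0 r m] n by (simp add: add.commute)
  also have "\<dots> = (\<Sum>i=0..m. q^(r*r+2*r) * (q^(i*i + (2*r+2)*i) * ip q (int m - int i) * ip q (int i) * ip q (int (2*r+2) + int i)))"
  proof (rule sum.cong[OF refl])
    fix i
    have e: "(i + r) * (i + r) + 2 * (i + r) = (r*r+2*r) + (i*i + (2*r+2)*i)" by (simp add: algebra_simps)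
    have a1: "int n - int (i + r) = int m - int i" using n by simp
    have a2: "int (i + r) - int r = int i" by simp
    have a3: "int (i + r) + int r + 2 = int (2*r+2) + int i" by simp
    show "f (i + r) = q^(r*r+2*r) * (q^(i*i + (2*r+2)*i) * ip q (int m - int i) * ip q (int i) * ip q (int (2*r+2) + int i))"
      unfolding f_def e a1 a2 a3 power_add by (simp only: ac_simps)
  qed
  also have "\<dots> = q^(r*r+2*r) * (ip q (int m) * ip q (int (2*r+2) + int m))"
    by (simp only: sum_distrib_left[symmetric] K_lemma[OF q1])
  also have "\<dots> = q^(r*r+2*r) * ip q (int n - int r) * ip q (int n + int r + 2)"
    using n by (simp add: ac_simps)
  finally show ?thesis unfolding f_def .
qed

lemma Ker:
  assumes "j \<noteq> 0"
  shows "(\<Sum>k=0..n. q^(k*k+2*k) * ip q (int n - int k) * ip q (int k + 1 - j) * ip q (int k + 1 + j))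
   = q^(nat (j^2-1)) * ip q (int n + 1 - j) * ip q (int n + 1 + j)"
proof (cases "j > 0")
  case True
  define r where "r = nat (j - 1)"
  have j: "j = int r + 1" using True r_def by simp
  have e: "nat (j^2-1) = r*r+2*r" unfolding j by (simp add: power2_eq_square algebra_simps nat_add_distrib nat_mult_distrib)
  show ?thesis unfolding e using Ker_pos[of n r] unfolding j
    by (simp add: algebra_simps)
next
  case False
  then have jn: "j < 0" using assms by simp
  define r where "r = nat (- j - 1)"
  have j: "j = - int r - 1" using jn r_def by simp
  have e: "nat (j^2-1) = r*r+2*r" unfolding j by (simp add: power2_eq_square algebra_simps nat_add_distrib nat_mult_distrib)
  show ?thesis unfolding e using Ker_pos[of n r] unfolding j
    by (simp add: algebra_simps)
qed

lemma ip_prod_zero: "int k + 1 - i < 0 \<or> int k+1+i < 0 \<Longrightarrow> g * ip q (int k+1-i) * ip q (int k+1+i) = 0"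
  by (auto simp: ip_neg)

lemma window_extend:
  assumes "k \<le> n"
  shows "(\<Sum>j=-(int k+1)..int k+1. g j * ip q (int k+1-j) * ip q (int k+1+j))
       = (\<Sum>j=-(int n+1)..int n+1. g j * ip q (int k+1-j) * ip q (int k+1+j))"
proof (rule sum.mono_neutral_left)
  show "\<forall>i\<in>{-(int n+1)..int n+1} - {-(int k+1)..int k+1}. g i * ip q (int k+1-i) * ip q (int k+1+i) = 0"
  proof
    fix i assume "i \<in> {-(int n+1)..int n+1} - {-(int k+1)..int k+1}"
    then have "int k+1-i<0 \<or> int k+1+i<0" by auto
    then show "g i * ip q (int k+1-i) * ip q (int k+1+i) = 0" by (rule ip_prod_zero)
  qed
qed (use assms in auto)

lemma Bailey_step:
  assumes a0: "\<alpha> 0 = 0"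
  shows "(\<Sum>k=0..n. q^(k*k+2*k) * ip q (int n - int k) *
            (\<Sum>j=-(int k+1)..int k+1. \<alpha> j * ip q (int k+1-j) * ip q (int k+1+j)))
       = (\<Sum>j=-(int n+1)..int n+1. q^(nat (j^2-1)) * \<alpha> j * ip q (int n+1-j) * ip q (int n+1+j))"
proof -
  have "(\<Sum>k=0..n. q^(k*k+2*k) * ip q (int n - int k) *
            (\<Sum>j=-(int k+1)..int k+1. \<alpha> j * ip q (int k+1-j) * ip q (int k+1+j)))
      = (\<Sum>k=0..n. q^(k*k+2*k) * ip q (int n - int k) *
            (\<Sum>j=-(int n+1)..int n+1. \<alpha> j * ip q (int k+1-j) * ip q (int k+1+j)))"
    by (rule sum.cong[OF refl], subst window_extend[where n=n]) auto
  also have "\<dots> = (\<Sum>k=0..n. \<Sum>j=-(int n+1)..int n+1. \<alpha> j * (q^(k*k+2*k) * ip q (int n - int k) * ip q (int k+1-j) * ip q (int k+1+j)))"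
    by (simp add: sum_distrib_left ac_simps)
  also have "\<dots> = (\<Sum>j=-(int n+1)..int n+1. \<alpha> j * (\<Sum>k=0..n. q^(k*k+2*k) * ip q (int n - int k) * ip q (int k+1-j) * ip q (int k+1+j)))"
    by (subst sum.swap) (simp add: sum_distrib_left)
  also have "\<dots> = (\<Sum>j=-(int n+1)..int n+1. q^(nat (j^2-1)) * \<alpha> j * ip q (int n+1-j) * ip q (int n+1+j))"
  proof (rule sum.cong[OF refl])
    fix j
    show "\<alpha> j * (\<Sum>k=0..n. q^(k*k+2*k) * ip q (int n - int k) * ip q (int k+1-j) * ip q (int k+1+j))
        = q^(nat (j^2-1)) * \<alpha> j * ip q (int n+1-j) * ip q (int n+1+j)"
    proof (cases "j = 0")
      case True then show ?thesis using a0 by simp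
    next
      case False
      then show ?thesis using Ker[OF False, of n] by (simp add: ac_simps)
    qed
  qed
  finally show ?thesis .
qed

end

definition ee :: "int \<Rightarrow> int" where "ee j = ((j-1)*(j-2)) div 2"
definition ww :: "complex \<Rightarrow> int \<Rightarrow> complex" where "ww z j = z ^ nat (j mod 3)"
definition uu :: "complex \<Rightarrow> complex \<Rightarrow> int \<Rightarrow> complex" where "uu q z j = q powi ee j * ww z j"
definition HH :: "complex \<Rightarrow> complex \<Rightarrow> nat \<Rightarrow> complex" where
  "HH q z M = (\<Sum>j=-int M..int M. uu q z j * (ip q (int M - j) * ip q (int M + j)))"

lemma sum_shift_int: "(\<Sum>j=a..b. f j) = (\<Sum>i=a-k..b-k. f (i + (k::int)))"
proof -
  have "(\<lambda>i. i + k) ` {a-k..b-k} = {a..b}" by simp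
  moreover have "inj_on (\<lambda>i. i + k) {a-k..b-k}" by (simp add: inj_on_def)
  ultimately show ?thesis by (metis (no_types, lifting) sum.reindex_cong)
qed

lemma ee_succ: "ee (j+1) = ee j + (j - 1)"
proof -
  have "(j+1-1)*(j+1-2) = (j-1)*(j-2) + 2*(j-1)" by (simp add: algebra_simps)
  then show ?thesis unfolding ee_def by simp
qed

lemma ee_pred: "ee (j-1) = ee j - (j - 2)"
  using ee_succ[of "j-1"] by simp

lemma ww_succ: assumes "z^3 = 1" shows "ww z (j+1) = z * ww z j"
proof -
  have "j mod 3 = 0 \<or> j mod 3 = 1 \<or> j mod 3 = 2" by arith
  moreover
  { assume "j mod 3 = 0" then have "(j+1) mod 3 = 1" by presburger
    then have ?thesis using \<open>j mod 3 = 0\<close> by (simp add: ww_def) }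
  moreover
  { assume "j mod 3 = 1" then have "(j+1) mod 3 = 2" by presburger
    then have ?thesis using \<open>j mod 3 = 1\<close> by (simp add: ww_def power2_eq_square) }
  moreover
  { assume "j mod 3 = 2" then have "(j+1) mod 3 = 0" by presburger
    then have ?thesis using \<open>j mod 3 = 2\<close> assms by (simp add: ww_def power3_eq_cube power2_eq_square mult.assoc) }
  ultimately show ?thesis by fast
qed

lemma ww_pred: assumes "z^3 = 1" shows "ww z (j-1) = z^2 * ww z j"
proof -
  have "ww z j = z * ww z (j-1)" using ww_succ[OF assms, of "j-1"] by simp
  then have "z^2 * ww z j = z^3 * ww z (j-1)" by (simp add: power3_eq_cube power2_eq_square)
  then show ?thesis using assms by simp
qed

lemma uu_succ: assumes "q \<noteq> 0" "z^3 = 1" shows "uu q z (j+1) = uu q z j * z * q powi (j - 1)"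
  unfolding uu_def ee_succ ww_succ[OF assms(2)] using assms(1)
  by (simp add: power_int_add)

lemma uu_pred: assumes "q \<noteq> 0" "z^3 = 1" shows "uu q z (j-1) = uu q z j * z^2 * q powi (2 - j)"
proof -
  have e: "ee j - (j - 2) = ee j + (2 - j)" by simp
  show ?thesis
    unfolding uu_def ee_pred e ww_pred[OF assms(2)] using assms(1)
    by (simp add: power_int_add)
qed

context fixes q :: complex assumes q1: "norm q < 1"
begin

lemma ip_down_int: "ip q x * (1 - q powi x) = ip q (x - 1)"
proof (cases "x < 0")
  case True then show ?thesis by (simp add: ip_neg)
next
  case False
  then obtain n where "x = int n" by (metis nonneg_int_cases not_less)
  then show ?thesis using ip_down[OF q1, of n] by simp
qed

lemma DP:
  assumes q0: "q \<noteq> 0"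
  shows "(1 - q powi (a+b+1)) * (1 - q powi (a+b+2)) * (ip q (a+1) * ip q (b+1))
     = q powi (a+1) * (ip q (a+1) * ip q (b-1)) + (1 + q powi (a+b+1)) * (ip q a * ip q b)
       + q powi (b+1) * (ip q (a-1) * ip q (b+1))"
proof (cases "a \<le> -2 \<or> b \<le> -2")
  case True then show ?thesis by (auto simp: ip_neg)
next
  case False
  have ia: "ip q a = ip q (a+1) * (1 - q powi (a+1))" using ip_down_int[of "a+1"] by simp
  have ia': "ip q (a-1) = ip q (a+1) * (1 - q powi (a+1)) * (1 - q powi a)"
    using ip_down_int[of a] ia by simp
  have ib: "ip q b = ip q (b+1) * (1 - q powi (b+1))" using ip_down_int[of "b+1"] by simp
  have ib': "ip q (b-1) = ip q (b+1) * (1 - q powi (b+1)) * (1 - q powi b)"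
    using ip_down_int[of b] ib by simp
  have p1: "q powi (a+1) = q powi a * q" "q powi (b+1) = q powi b * q"
    using q0 by (simp_all add: power_int_add)
  have p2: "q powi (a+b+1) = q powi a * q powi b * q" "q powi (a+b+2) = q powi a * q powi b * q^2"
    using q0 by (simp_all add: power_int_add)
  show ?thesis unfolding ia ia' ib ib' p1 p2 by (simp add: algebra_simps power2_eq_square)
qed

lemma fzero: "int M - i < 0 \<or> int M + i < 0 \<Longrightarrow> g * (ip q (int M - i) * ip q (int M + i)) = 0"
  by (auto simp: ip_neg)

lemma H_rec:
  assumes q0: "q \<noteq> 0" and z3: "z^3 = 1"
  shows "(1 - q powi (2*int M+1)) * (1 - q powi (2*int M+2)) * HH q z (Suc M)
       = HH q z M * (1 + z * q powi (int M - 1)) * (1 + z^2 * q powi (int M + 2))"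
proof -
  define f where "f j = ip q (int M - j) * ip q (int M + j)" for j
  define Q where "Q = q powi (2*int M+1)"
  have fnz: "0 \<le> int M - i \<and> 0 \<le> int M + i" if "f i \<noteq> 0" for i
  proof (rule ccontr)
    assume "\<not> (0 \<le> int M - i \<and> 0 \<le> int M + i)"
    then have "int M - i < 0 \<or> int M + i < 0" by auto
    then have "1 * f i = 0" unfolding f_def by (rule fzero)
    with that show False by simp
  qed
  have dp: "(1 - q powi (2*int M+1)) * (1 - q powi (2*int M+2)) * (ip q (int (Suc M) - j) * ip q (int (Suc M) + j))
      = q powi (int M - j + 1) * f (j-1) + (1 + Q) * f j + q powi (int M + j + 1) * f (j+1)" for j
  proof -
    have "(1 - q powi ((int M - j)+(int M + j)+1)) * (1 - q powi ((int M - j)+(int M + j)+2)) * (ip q ((int M - j)+1) * ip q ((int M + j)+1))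
     = q powi ((int M - j)+1) * (ip q ((int M - j)+1) * ip q ((int M + j)-1)) + (1 + q powi ((int M - j)+(int M + j)+1)) * (ip q (int M - j) * ip q (int M + j))
       + q powi ((int M + j)+1) * (ip q ((int M - j)-1) * ip q ((int M + j)+1))"
      by (rule DP[OF q0])
    moreover have "(int M - j)+(int M + j) = 2 * int M" by simp
    ultimately show ?thesis unfolding f_def Q_def by (simp add: algebra_simps)
  qed
  have "(1 - q powi (2*int M+1)) * (1 - q powi (2*int M+2)) * HH q z (Suc M)
      = (\<Sum>j=-int (Suc M)..int (Suc M). uu q z j * (q powi (int M - j + 1) * f (j-1))
          + (1 + Q) * (uu q z j * f j) + uu q z j * (q powi (int M + j + 1) * f (j+1)))"
    unfolding HH_def sum_distrib_left
    by (rule sum.cong[OF refl]) (simp only: mult.left_commute[of _ "uu q z _"] dp, simp add: algebra_simps)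
  also have "\<dots> = (\<Sum>j=-int (Suc M)..int (Suc M). uu q z j * (q powi (int M - j + 1) * f (j-1)))
          + (1 + Q) * (\<Sum>j=-int (Suc M)..int (Suc M). uu q z j * f j)
          + (\<Sum>j=-int (Suc M)..int (Suc M). uu q z j * (q powi (int M + j + 1) * f (j+1)))"
    by (simp add: sum.distrib sum_distrib_left)
  also have "(\<Sum>j=-int (Suc M)..int (Suc M). uu q z j * (q powi (int M - j + 1) * f (j-1)))
      = (\<Sum>i=-int M..int M. z * q powi (int M - 1) * (uu q z i * f i))"
  proof -
    have "(\<Sum>j=-int (Suc M)..int (Suc M). uu q z j * (q powi (int M - j + 1) * f (j-1)))
        = (\<Sum>i=-int (Suc M) - 1..int (Suc M) - 1. uu q z (i+1) * (q powi (int M - (i+1) + 1) * f (i+1-1)))"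
      by (rule sum_shift_int)
    also have "\<dots> = (\<Sum>i=-int (Suc M) - 1..int (Suc M) - 1. z * q powi (int M - 1) * (uu q z i * f i))"
    proof (rule sum.cong[OF refl])
      fix i
      have "q powi (i - 1) * q powi (int M - (i+1) + 1) = q powi (int M - 1)"
        using q0 by (simp flip: power_int_add)
      then show "uu q z (i+1) * (q powi (int M - (i+1) + 1) * f (i+1-1)) = z * q powi (int M - 1) * (uu q z i * f i)"
        unfolding uu_succ[OF q0 z3] by (simp add: ac_simps)
    qed
    also have "\<dots> = (\<Sum>i=-int M..int M. z * q powi (int M - 1) * (uu q z i * f i))"
      by (rule sum.mono_neutral_right) (auto dest!: fnz)
    finally show ?thesis .
  qed
  also have "(\<Sum>j=-int (Suc M)..int (Suc M). uu q z j * (q powi (int M + j + 1) * f (j+1)))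
      = (\<Sum>i=-int M..int M. z^2 * q powi (int M + 2) * (uu q z i * f i))"
  proof -
    have "(\<Sum>j=-int (Suc M)..int (Suc M). uu q z j * (q powi (int M + j + 1) * f (j+1)))
        = (\<Sum>i=-int (Suc M) - (-1)..int (Suc M) - (-1). uu q z (i + -1) * (q powi (int M + (i + -1) + 1) * f (i + -1 + 1)))"
      by (rule sum_shift_int)
    also have "\<dots> = (\<Sum>i=-int (Suc M) - (-1)..int (Suc M) - (-1). z^2 * q powi (int M + 2) * (uu q z i * f i))"
    proof (rule sum.cong[OF refl])
      fix i
      have "(2 - i) + (int M + (i + -1) + 1) = int M + 2" by simp
      then have "q powi (2 - i) * q powi (int M + (i + -1) + 1) = q powi (int M + 2)"
        using q0 by (metis power_int_add)
      moreover have "uu q z (i + -1) = uu q z i * z^2 * q powi (2 - i)"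
        using uu_pred[OF q0 z3, of i] by simp
      ultimately show "uu q z (i + -1) * (q powi (int M + (i + -1) + 1) * f (i + -1 + 1)) = z^2 * q powi (int M + 2) * (uu q z i * f i)"
        by (simp add: ac_simps)
    qed
    also have "\<dots> = (\<Sum>i=-int M..int M. z^2 * q powi (int M + 2) * (uu q z i * f i))"
      by (rule sum.mono_neutral_right) (auto dest!: fnz)
    finally show ?thesis .
  qed
  also have "(\<Sum>j=-int (Suc M)..int (Suc M). uu q z j * f j) = (\<Sum>i=-int M..int M. uu q z i * f i)"
    by (rule sum.mono_neutral_right) (auto dest!: fnz)
  also have "(\<Sum>i=-int M..int M. z * q powi (int M - 1) * (uu q z i * f i))
      + (1 + Q) * (\<Sum>i=-int M..int M. uu q z i * f i)
      + (\<Sum>i=-int M..int M. z^2 * q powi (int M + 2) * (uu q z i * f i))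
      = (\<Sum>i=-int M..int M. uu q z i * f i) * (z * q powi (int M - 1) + 1 + Q + z^2 * q powi (int M + 2))"
    by (simp add: sum_distrib_left sum_distrib_right sum.distrib algebra_simps)
  also have "z * q powi (int M - 1) + 1 + Q + z^2 * q powi (int M + 2) = (1 + z * q powi (int M - 1)) * (1 + z^2 * q powi (int M + 2))"
  proof -
    have "q powi (int M - 1) * q powi (int M + 2) = Q" unfolding Q_def using q0 by (simp flip: power_int_add)
    then show ?thesis using z3 by (simp add: algebra_simps power3_eq_cube power2_eq_square)
  qed
  finally show ?thesis unfolding HH_def f_def by (simp add: ac_simps)
qed

end

definition PP :: "complex \<Rightarrow> nat \<Rightarrow> complex" where
  "PP q M = (\<Prod>k=1..M-2. (1 - q^k + q^(2*k)))"
definition cub :: "complex \<Rightarrow> complex \<Rightarrow> nat \<Rightarrow> complex" where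
  "cub q c M = (1 + c*q^(M-1)) * (1 + c*q*q^(M-1)) * (1 + c*q^2*q^(M-1))"
definition om :: complex where "om = Complex (-1/2) (sqrt 3 / 2)"
definition alpha :: "complex \<Rightarrow> int \<Rightarrow> complex" where
  "alpha q j = of_int (Legendre j 3) * q ^ nat (ee j)"

lemma om_eq: "om^2 + om + 1 = 0"
  by (simp add: om_def complex_eq_iff power2_eq_square)

lemma om2_eq: "(om^2)^2 + om^2 + 1 = 0"
proof -
  have "(om^2)^2 = om^3 * om" by (simp add: power2_eq_square power3_eq_cube mult_ac)
  moreover have "om^3 = 1"
  proof -
    have "om^3 - 1 = (om - 1) * (om^2 + om + 1)" by (simp add: algebra_simps power2_eq_square power3_eq_cube)
    then show ?thesis using om_eq by simp
  qed
  ultimately show ?thesis using om_eq by (simp add: add.commute add.left_commute)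
qed

lemma cube_of: "z^2 + z + 1 = 0 \<Longrightarrow> z^3 = (1::complex)"
proof -
  assume "z^2 + z + 1 = 0"
  have "z^3 - 1 = (z - 1) * (z^2 + z + 1)" by (simp add: algebra_simps power2_eq_square power3_eq_cube)
  then show ?thesis using \<open>z^2 + z + 1 = 0\<close> by simp
qed

lemma om_ne: "om \<noteq> om^2"
proof
  assume "om = om^2"
  then have "Im om = Im (om^2)" by simp
  then show False by (simp add: om_def power2_eq_square)
qed

lemma om4: "(om^2)^2 = om"
proof -
  have "(om^2)^2 = om^3 * om" by (simp add: power2_eq_square power3_eq_cube mult_ac)
  then show ?thesis using cube_of[OF om_eq] by simp
qed

lemma Legendre3: "Legendre j 3 = (if j mod 3 = 1 then 1 else if j mod 3 = 2 then -1 else 0)"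
proof -
  have sq: "(y^2) mod 3 \<noteq> 2" for y :: int
  proof -
    have "(y^2) mod 3 = ((y mod 3)^2) mod 3" by (simp add: power_mod)
    moreover have "y mod 3 = 0 \<or> y mod 3 = 1 \<or> y mod 3 = 2" by arith
    ultimately show ?thesis by auto
  qed
  have "j mod 3 = 0 \<or> j mod 3 = 1 \<or> j mod 3 = 2" by arith
  moreover
  { assume "j mod 3 = 0" then have ?thesis by (simp add: Legendre_def cong_def) }
  moreover
  { assume h: "j mod 3 = 1"
    have "QuadRes 3 j" unfolding QuadRes_def cong_def using h by (intro exI[of _ 1]) simp
    then have ?thesis using h by (simp add: Legendre_def cong_def) }
  moreover
  { assume h: "j mod 3 = 2"
    have "\<not> QuadRes 3 j" unfolding QuadRes_def cong_def using h sq by metis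
    then have ?thesis using h by (simp add: Legendre_def cong_def) }
  ultimately show ?thesis by fast
qed

lemma chi_ww: "of_int (Legendre j 3) = (ww om j - ww (om^2) j) / (om - om^2)"
proof -
  have ne: "om - om^2 \<noteq> 0" using om_ne by simp
  have "j mod 3 = 0 \<or> j mod 3 = 1 \<or> j mod 3 = 2" by arith
  moreover
  { assume "j mod 3 = 0" then have ?thesis by (simp add: Legendre3 ww_def) }
  moreover
  { assume "j mod 3 = 1" then have ?thesis using ne by (simp add: Legendre3 ww_def) }
  moreover
  { assume h: "j mod 3 = 2"
    have "om^2 - (om^2)^2 = - (om - om^2)" using om4 by simp
    then have "(om^2 - (om^2)^2) / (om - om^2) = -1" by (subst nonzero_divide_eq_eq[OF ne]) simp
    then have ?thesis using h by (simp add: Legendre3 ww_def) }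
  ultimately show ?thesis by fast
qed

lemma ee_nonneg: "0 \<le> ee j"
proof -
  have "0 \<le> (j-1)*(j-2)"
    by (cases "j \<le> 1") (auto simp: zero_le_mult_iff)
  then show ?thesis unfolding ee_def by simp
qed

lemma PP_Suc: assumes "M \<ge> 1" shows "PP q (Suc M) = PP q M * (1 - q^(M-1) + q^(2*(M-1)))"
proof (cases "M = 1")
  case True then show ?thesis by (simp add: PP_def)
next
  case False
  then have m: "Suc M - 2 = Suc (M - 2)" "M - 1 = Suc (M - 2)" using assms by auto
  show ?thesis unfolding PP_def m by simp
qed

context fixes q :: complex assumes q1: "norm q < 1"
begin

lemma HH_one: "qpoch q q 2 * HH q z 1 = q^3 * ww z (-1) + q * (1 + q) + ww z 1"
proof -
  have w: "{-1..1::int} = {-1,0,1}" by auto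
  have n1: "1 - q \<noteq> 0" using one_minus_pow_nz[OF q1, of 0] by simp
  have n2: "1 - q*q \<noteq> 0" using one_minus_pow_nz[OF q1, of 1] by simp
  have p2: "qpoch q q 2 = (1 - q) * (1 - q*q)" by (simp add: qpoch_def numeral_2_eq_2)
  have i0: "ip q 0 = 1" by (simp add: qfact_inv_def qpoch_def)
  have i1: "ip q 1 = 1/(1-q)" by (simp add: qfact_inv_def qpoch_def)
  have i2: "ip q 2 = 1/((1-q)*(1-q*q))" using p2 by (simp add: qfact_inv_def)
  have e: "ee (-1) = 3" "ee 0 = 1" "ee 1 = 0" by (simp_all add: ee_def)
  have hx: "HH q z 1 = q^3 * ww z (-1) * ip q 2 * ip q 0 + q * ww z 0 * ip q 1 * ip q 1 + ww z 1 * ip q 0 * ip q 2"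
    by (simp add: HH_def w uu_def e)
  have w0: "ww z 0 = 1" by (simp add: ww_def)
  have a: "qpoch q q 2 * ip q 2 = 1" unfolding p2 i2 using n1 n2 by simp
  have b: "qpoch q q 2 * (ip q 1 * ip q 1) = 1 + q"
  proof -
    have eq: "1 - q*q = (1 - q) * (1 + q)" by (simp add: algebra_simps)
    have "(1 - q) * ((1 - q) * (1 + q)) * (1 / (1 - q) * (1 / (1 - q))) = ((1-q)/(1-q)) * ((1-q)/(1-q)) * (1+q)"
      by simp
    then show ?thesis unfolding p2 i1 eq using n1 by simp
  qed
  have "qpoch q q 2 * HH q z 1 = q^3 * ww z (-1) * (qpoch q q 2 * ip q 2) * ip q 0
     + q * ww z 0 * (qpoch q q 2 * (ip q 1 * ip q 1)) + ww z 1 * ip q 0 * (qpoch q q 2 * ip q 2)"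
    unfolding hx by (simp add: algebra_simps)
  then show ?thesis unfolding a b i0 w0 by simp
qed

lemma HH_closed:
  assumes q0: "q \<noteq> 0" and hz: "z^2 + z + 1 = 0" and M: "M \<ge> 1"
  shows "qpoch q q (2*M) * HH q z M = - PP q M * cub q (z^2) M"
  using M
proof (induction M rule: nat_induct_at_least)
  case base
  have w1: "ww z (-1) = z^2" "ww z 1 = z" by (simp_all add: ww_def)
  have "qpoch q q 2 * HH q z 1 = q^3 * z^2 + q * (1 + q) + z" using HH_one w1 by simp
  moreover have "q^3 * z^2 + q * (1 + q) + z = - PP q 1 * cub q (z^2) 1"
  proof -
    have z3: "z^3 = 1" by (rule cube_of[OF hz])
    have "1 + z^2 = (z^2 + z + 1) - z" by simp
    then have a: "1 + z^2 = - z" using hz by simp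
    have c1: "cub q (z^2) 1 = (1 + z^2) * (1 + z^2*q) * (1 + z^2*q^2)" by (simp add: cub_def)
    have "- PP q 1 * cub q (z^2) 1 = z * (1 + z^2*q) * (1 + z^2*q^2)"
      unfolding c1 a by (simp add: PP_def)
    also have "\<dots> = z + z^3 * q + z^3 * q^2 + z^3 * z^2 * q^3"
      by (simp add: algebra_simps power2_eq_square power3_eq_cube)
    finally show ?thesis using z3 by (simp add: algebra_simps power2_eq_square)
  qed
  ultimately show ?case by simp
next
  case (Suc M)
  have z3: "z^3 = 1" by (rule cube_of[OF hz])
  have hr: "(1 - q powi (2*int M+1)) * (1 - q powi (2*int M+2)) * HH q z (Suc M)
       = HH q z M * (1 + z * q powi (int M - 1)) * (1 + z^2 * q powi (int M + 2))"
    by (rule H_rec[OF q1 q0 z3])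
  have c1: "q powi (2*int M+1) = q^(2*M+1)" "q powi (2*int M+2) = q^(2*M+2)" "q powi (int M + 2) = q^(M+2)"
  proof -
    have "q powi (int (2*M+1)) = q^(2*M+1)" "q powi (int (2*M+2)) = q^(2*M+2)" "q powi (int (M+2)) = q^(M+2)"
      by (rule power_int_of_nat)+
    then show "q powi (2*int M+1) = q^(2*M+1)" "q powi (2*int M+2) = q^(2*M+2)" "q powi (int M + 2) = q^(M+2)"
      by (simp_all add: add.commute)
  qed
  have c2: "q powi (int M - 1) = q^(M-1)"
  proof -
    have "q powi (int (M-1)) = q^(M-1)" by (rule power_int_of_nat)
    then show ?thesis using Suc.hyps by (simp add: of_nat_diff)
  qed
  have hr': "(1 - q^(2*M+1)) * (1 - q^(2*M+2)) * HH q z (Suc M)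
       = HH q z M * (1 + z * q^(M-1)) * (1 + z^2 * q^(M+2))"
    using hr unfolding c1 c2 .
  have pq: "qpoch q q (2 * Suc M) = qpoch q q (2*M) * ((1 - q^(2*M+1)) * (1 - q^(2*M+2)))"
    by (simp add: qpoch_Suc algebra_simps)
  define x where "x = q^(M-1)"
  have e1: "M = (M-1) + 1" "M + 2 = (M-1) + 3" "Suc M - 1 = (M-1) + 1" "2*(M-1) = (M-1) + (M-1)"
    using Suc.hyps by auto
  have xs: "q^(M+2) = q^3 * x" "q^(Suc M - 1) = q * x" "q^(2*(M-1)) = x^2"
    unfolding x_def
    by (subst e1(2), simp only: power_add mult.commute,
        subst e1(3), simp only: power_add power_one_right mult.commute,
        subst e1(4), simp only: power_add power2_eq_square)
  have "qpoch q q (2 * Suc M) * HH q z (Suc M) = qpoch q q (2*M) * ((1 - q^(2*M+1)) * (1 - q^(2*M+2)) * HH q z (Suc M))"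
    by (simp only: pq mult.assoc)
  also have "\<dots> = qpoch q q (2*M) * (HH q z M * (1 + z * q^(M-1)) * (1 + z^2 * q^(M+2)))"
    by (simp only: hr')
  also have "\<dots> = (qpoch q q (2*M) * HH q z M) * (1 + z * x) * (1 + z^2 * (q^3 * x))"
    unfolding x_def[symmetric] xs by (simp only: mult.assoc)
  also have "\<dots> = - PP q M * cub q (z^2) M * (1 + z * x) * (1 + z^2 * (q^3 * x))"
    by (simp only: Suc.IH)
  also have "\<dots> = - PP q (Suc M) * cub q (z^2) (Suc M)"
  proof -
    have key: "(1 + z^2*x) * (1 + z*x) = 1 - x + x^2"
    proof -
      have "(1 + z^2*x) * (1 + z*x) - (1 - x + x^2) = (z^2+z+1) * (x + x^2*(z-1))"
        by (simp add: algebra_simps power2_eq_square power3_eq_cube)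
      then show ?thesis using hz by simp
    qed
    have cM: "cub q (z^2) M = (1 + z^2*x) * (1 + z^2*(q*x)) * (1 + z^2*(q^2*x))"
      unfolding cub_def x_def by (simp only: mult.assoc)
    have qq: "q*(q*x) = q^2*x" "q^2*(q*x) = q^3*x" by (simp_all add: power2_eq_square power3_eq_cube)
    have cS: "cub q (z^2) (Suc M) = (1 + z^2*(q*x)) * (1 + z^2*(q^2*x)) * (1 + z^2*(q^3*x))"
      unfolding cub_def xs by (simp only: mult.assoc qq)
    have pS: "PP q (Suc M) = PP q M * (1 - x + x^2)"
      unfolding PP_Suc[OF Suc.hyps] x_def[symmetric] xs ..
    show ?thesis unfolding cM cS pS key[symmetric] by (simp only: mult_ac minus_mult_left)
  qed
  finally show ?case .
qed

end

context fixes q :: complex assumes q1: "norm q < 1"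
begin

lemma one_plus_pow_nz: "1 + q^n \<noteq> 0"
proof (cases n)
  case 0 then show ?thesis by simp
next
  case (Suc k)
  have "norm (q^Suc k) < 1" by (rule pow_lt1[OF q1])
  then have "q^n \<noteq> -1" using Suc by auto
  then show ?thesis by (metis add.commute add_eq_0_iff)
qed

lemma qpoch_m1_nz: "qpoch (-1) q n \<noteq> 0"
  unfolding qpoch_def using one_plus_pow_nz by simp

lemma R_closed: "qpoch (-1) (q^3) n / qpoch (-1) q n = PP q (Suc n)"
proof (induction n)
  case 0 then show ?case by (simp add: qpoch_def PP_def)
next
  case (Suc n)
  have y: "(q^3)^n = (q^n)^3" "q^(2*n) = (q^n)^2" by (simp_all add: power_mult[symmetric] mult.commute)
  have f: "1 + (q^3)^n = (1 + q^n) * (1 - q^n + q^(2*n))"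
    unfolding y by (simp add: algebra_simps power2_eq_square power3_eq_cube)
  have "qpoch (-1) (q^3) (Suc n) / qpoch (-1) q (Suc n)
      = (qpoch (-1) (q^3) n / qpoch (-1) q n) * ((1 + (q^3)^n) / (1 + q^n))"
    by (simp add: qpoch_Suc)
  also have "(1 + (q^3)^n) / (1 + q^n) = 1 - q^n + q^(2*n)"
    unfolding f using one_plus_pow_nz[of n] by simp
  also have "qpoch (-1) (q^3) n / qpoch (-1) q n = PP q (Suc n)" by (rule Suc.IH)
  also have "PP q (Suc n) * (1 - q^n + q^(2*n)) = PP q (Suc (Suc n))"
    using PP_Suc[of "Suc n" q] by simp
  finally show ?case .
qed

lemma cub_expand: "cub q c M = 1 + c*q^(M-1)*(1+q+q^2) + c^2*(q^(M-1))^2*q*(1+q+q^2) + c^3*(q^(M-1))^3*q^3"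
  by (simp add: cub_def algebra_simps power2_eq_square power3_eq_cube)

lemma seed_nz:
  assumes q0: "q \<noteq> 0"
  shows "(1 + q + q^2) * (q^n * (1 - q^(Suc n)) * (qpoch (-1) (q^3) n / qpoch (-1) q n) * ip q (int (2*n+2)))
     = (\<Sum>j=-(int n+1)..int n+1. alpha q j * ip q (int n+1-j) * ip q (int n+1+j))"
proof -
  define M where "M = Suc n"
  define f where "f j = ip q (int M - j) * ip q (int M + j)" for j
  have ne: "om - om^2 \<noteq> 0" using om_ne by simp
  have pz: "qpoch q q (2*M) \<noteq> 0" by (rule qpoch_nz[OF q1])
  have aj: "alpha q j * ip q (int n+1-j) * ip q (int n+1+j) = (uu q om j * f j - uu q (om^2) j * f j) / (om - om^2)" for j
  proof -
    have "q ^ nat (ee j) = q powi ee j" using ee_nonneg[of j] by (metis int_nat_eq power_int_of_nat)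
    then show ?thesis unfolding alpha_def chi_ww uu_def f_def M_def
      by (simp add: field_simps ne)
  qed
  have "(\<Sum>j=-(int n+1)..int n+1. alpha q j * ip q (int n+1-j) * ip q (int n+1+j))
      = (HH q om M - HH q (om^2) M) / (om - om^2)"
  proof -
    have wn: "-(int n+1) = -int M" "int n + 1 = int M" by (simp_all add: M_def)
    show ?thesis unfolding aj unfolding wn HH_def f_def[symmetric] sum_divide_distrib[symmetric] sum_subtractf ..
  qed
  also have "\<dots> = (qpoch q q (2*M) * HH q om M - qpoch q q (2*M) * HH q (om^2) M) / (om - om^2) / qpoch q q (2*M)"
  proof -
    have "qpoch q q (2*M) * HH q om M - qpoch q q (2*M) * HH q (om^2) M = qpoch q q (2*M) * (HH q om M - HH q (om^2) M)"
      by (simp add: algebra_simps)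
    then show ?thesis using pz ne by simp
  qed
  also have "qpoch q q (2*M) * HH q om M - qpoch q q (2*M) * HH q (om^2) M
      = PP q M * (cub q om M - cub q (om^2) M)"
  proof -
    have M1: "M \<ge> 1" unfolding M_def by simp
    show ?thesis unfolding HH_closed[OF q1 q0 om_eq M1] HH_closed[OF q1 q0 om2_eq M1] om4
      by (simp add: algebra_simps)
  qed
  also have "cub q om M - cub q (om^2) M = (om - om^2) * ((1+q+q^2) * q^n * (1 - q^(Suc n)))"
  proof -
    have o3: "om^3 = 1" by (rule cube_of[OF om_eq])
    have o6: "(om^2)^3 = 1" by (rule cube_of[OF om2_eq])
    have x: "q^(M-1) = q^n" "q^(Suc n) = q * q^n" unfolding M_def by simp_all
    show ?thesis unfolding cub_expand o3 o6 om4 x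
      by (simp add: algebra_simps power2_eq_square)
  qed
  finally have r: "(\<Sum>j=-(int n+1)..int n+1. alpha q j * ip q (int n+1-j) * ip q (int n+1+j))
      = PP q M * ((1+q+q^2) * q^n * (1 - q^(Suc n))) / qpoch q q (2*M)"
    using ne by simp
  have "ip q (int (2*n+2)) = 1 / qpoch q q (2*M)" unfolding M_def ip_nat by simp
  then show ?thesis unfolding r R_closed M_def by simp
qed

end

lemma ee_zero_iff: "ee j = 0 \<longleftrightarrow> j = 1 \<or> j = 2"
proof
  assume h: "ee j = 0"
  show "j = 1 \<or> j = 2"
  proof (rule ccontr)
    assume "\<not> (j = 1 \<or> j = 2)"
    then have "j \<le> 0 \<or> j \<ge> 3" by auto
    then have "2 \<le> (j-1)*(j-2)"
    proof
      assume "j \<le> 0"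
      then have "1*2 \<le> (1-j)*(2-j)" by (intro mult_mono) auto
      moreover have "(1-j)*(2-j) = (j-1)*(j-2)" by (simp add: algebra_simps)
      ultimately show ?thesis by simp
    next
      assume "j \<ge> 3"
      then have "2*1 \<le> (j-1)*(j-2)" by (intro mult_mono) auto
      then show ?thesis by simp
    qed
    then have "1 \<le> ee j" unfolding ee_def by simp
    with h show False by simp
  qed
next
  assume "j = 1 \<or> j = 2" then show "ee j = 0" by (auto simp: ee_def)
qed

lemma ip0: "k \<ge> 0 \<Longrightarrow> ip 0 k = 1"
  by (simp add: qfact_inv_def qpoch_def)

lemma seed_0:
  "(1 + 0 + 0^2) * ((0::complex)^n * (1 - 0^(Suc n)) * (qpoch (-1) (0^3) n / qpoch (-1) 0 n) * ip 0 (int (2*n+2)))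
     = (\<Sum>j=-(int n+1)..int n+1. alpha 0 j * ip 0 (int n+1-j) * ip 0 (int n+1+j))"
proof -
  have nz: "qpoch (-1) (0::complex) n \<noteq> 0" using qpoch_m1_nz[of 0 n] by simp
  have L: "(1 + 0 + 0^2) * ((0::complex)^n * (1 - 0^(Suc n)) * (qpoch (-1) (0^3) n / qpoch (-1) 0 n) * ip 0 (int (2*n+2))) = 0^n"
    using nz by (simp add: ip0)
  have t: "alpha 0 j * ip 0 (int n+1-j) * ip 0 (int n+1+j) = (if j = 1 then 1 else 0) - (if j = 2 then 1 else 0)"
    if "j \<in> {-(int n+1)..int n+1}" for j
  proof -
    have i: "ip 0 (int n+1-j) = 1" "ip 0 (int n+1+j) = 1" using that by (simp_all add: ip0)
    have "alpha 0 j = (if j = 1 then 1 else 0) - (if j = 2 then 1 else 0)"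
    proof (cases "j = 1 \<or> j = 2")
      case True
      then show ?thesis by (auto simp: alpha_def ee_def Legendre3)
    next
      case False
      then have "ee j \<noteq> 0" using ee_zero_iff by simp
      then have "nat (ee j) \<noteq> 0" using ee_nonneg[of j] by simp
      then show ?thesis using False by (simp add: alpha_def)
    qed
    then show ?thesis using i by simp
  qed
  have "(\<Sum>j=-(int n+1)..int n+1. alpha 0 j * ip 0 (int n+1-j) * ip 0 (int n+1+j))
      = (\<Sum>j=-(int n+1)..int n+1. (if j = 1 then 1 else 0) - (if j = 2 then (1::complex) else 0))"
    by (rule sum.cong[OF refl]) (rule t)
  also have "\<dots> = (if (1::int) \<in> {-(int n+1)..int n+1} then 1 else 0) - (if (2::int) \<in> {-(int n+1)..int n+1} then 1 else 0)"
    by (simp add: sum_subtractf)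
  also have "\<dots> = 0^n" by (cases n) auto
  finally show ?thesis using L by simp
qed

lemma seed:
  assumes q1: "norm q < 1"
  shows "(1 + q + q^2) * (q^n * (1 - q^(Suc n)) * (qpoch (-1) (q^3) n / qpoch (-1) q n) * ip q (int (2*n+2)))
     = (\<Sum>j=-(int n+1)..int n+1. alpha q j * ip q (int n+1-j) * ip q (int n+1+j))"
proof (cases "q = 0")
  case True then show ?thesis using seed_0 by simp
next
  case False then show ?thesis by (rule seed_nz[OF q1])
qed

definition Nf :: "nat \<Rightarrow> (nat \<Rightarrow> nat) \<Rightarrow> nat \<Rightarrow> nat" where
  "Nf v n i = (\<Sum>k = i..v. n k)"

definition Wt :: "complex \<Rightarrow> nat \<Rightarrow> nat \<Rightarrow> (nat \<Rightarrow> nat) \<Rightarrow> complex" where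
  "Wt q v a n = q ^ ((\<Sum>i = a..v. (Nf v n i + 2) * Nf v n i) + n v)
          / ((\<Prod>i = a..v - 1. qpoch q q (n i)) * qpoch q q (2 * n v + 2))
          * (qpoch (-1) (q ^ 3) (n v) / qpoch (-1) q (n v))
          * (1 - q ^ (1 + n v))"

definition Sset :: "nat \<Rightarrow> nat \<Rightarrow> nat \<Rightarrow> (nat \<Rightarrow> nat) set" where
  "Sset v a m = {n. (\<forall>i. i \<notin> {a..v} \<longrightarrow> n i = 0) \<and> Nf v n a = m}"

definition G :: "complex \<Rightarrow> nat \<Rightarrow> nat \<Rightarrow> nat \<Rightarrow> complex" where
  "G q v a m = (\<Sum>n\<in>Sset v a m. Wt q v a n)"

lemma le_Nf: "i \<in> {a..v} \<Longrightarrow> n i \<le> Nf v n a"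
  unfolding Nf_def by (rule member_le_sum) auto

lemma finite_funs_bounded:
  "finite {n :: nat \<Rightarrow> nat. (\<forall>i. i \<notin> {a..v} \<longrightarrow> n i = 0) \<and> (\<forall>i \<in> {a..v}. n i \<le> K)}"
proof -
  have "{n :: nat \<Rightarrow> nat. (\<forall>i. i \<notin> {a..v} \<longrightarrow> n i = 0) \<and> (\<forall>i \<in> {a..v}. n i \<le> K)}
      \<subseteq> {f. \<forall>x. (x \<in> {a..v} \<longrightarrow> f x \<in> {0..K}) \<and> (x \<notin> {a..v} \<longrightarrow> f x = 0)}" by auto
  moreover have "finite {f :: nat \<Rightarrow> nat. \<forall>x. (x \<in> {a..v} \<longrightarrow> f x \<in> {0..K}) \<and> (x \<notin> {a..v} \<longrightarrow> f x = 0)}"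
    by (rule finite_set_of_finite_funs) auto
  ultimately show ?thesis by (rule finite_subset)
qed

lemma finite_Sset: "finite (Sset v a m)"
proof -
  have "Sset v a m \<subseteq> {n :: nat \<Rightarrow> nat. (\<forall>i. i \<notin> {a..v} \<longrightarrow> n i = 0) \<and> (\<forall>i \<in> {a..v}. n i \<le> m)}"
    unfolding Sset_def using le_Nf by fastforce
  then show ?thesis using finite_funs_bounded finite_subset by blast
qed

lemma Sset_base: "Sset v v m = {(\<lambda>i. if i = v then m else 0)}"
proof -
  have "n = (\<lambda>i. if i = v then m else 0)" if "n \<in> Sset v v m" for n
    using that unfolding Sset_def Nf_def by (auto intro!: ext)
  moreover have "(\<lambda>i. if i = v then m else 0) \<in> Sset v v m" unfolding Sset_def Nf_def by auto
  ultimately show ?thesis by blast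
qed

lemma G_base:
  assumes "v \<ge> 1"
  shows "G q v v m = q ^ ((m + 2) * m + m) / qpoch q q (2*m+2) * (qpoch (-1) (q ^ 3) m / qpoch (-1) q m) * (1 - q ^ (1 + m))"
proof -
  have e: "{v..v - Suc 0} = {}" using assms by auto
  show ?thesis unfolding G_def Sset_base by (simp add: Wt_def Nf_def e)
qed

lemma Nf_upd: "i > b \<Longrightarrow> Nf v (n(b := x)) i = Nf v n i"
  unfolding Nf_def by (rule sum.cong) auto

lemma Nf_split: "b \<le> v \<Longrightarrow> Nf v n b = n b + Nf v n (Suc b)"
  unfolding Nf_def by (rule sum.atLeast_Suc_atMost)

lemma Wt_step:
  assumes bv: "Suc b \<le> v" and t: "t \<le> M" and nt: "Nf v n (Suc b) = t"
  shows "Wt q v b (n(b := M - t)) = q^(M*M + 2*M) * (1 / qpoch q q (M - t)) * Wt q v (Suc b) n"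
proof -
  define n' where "n' = n(b := M - t)"
  have nv: "n' v = n v" unfolding n'_def using bv by simp
  have NS: "Nf v n' i = Nf v n i" if "i \<ge> Suc b" for i unfolding n'_def using that by (intro Nf_upd) auto
  have Nb: "Nf v n' b = M - t + Nf v n (Suc b)"
    using Nf_split[of b v n'] bv NS[of "Suc b"] unfolding n'_def by simp
  then have NbM: "Nf v n' b = M" using nt t by simp
  have sumeq: "(\<Sum>i = b..v. (Nf v n' i + 2) * Nf v n' i) = (M*M + 2*M) + (\<Sum>i = Suc b..v. (Nf v n i + 2) * Nf v n i)"
  proof -
    have "(\<Sum>i = b..v. (Nf v n' i + 2) * Nf v n' i) = (Nf v n' b + 2) * Nf v n' b + (\<Sum>i = Suc b..v. (Nf v n' i + 2) * Nf v n' i)"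
      using bv by (intro sum.atLeast_Suc_atMost) simp
    also have "(\<Sum>i = Suc b..v. (Nf v n' i + 2) * Nf v n' i) = (\<Sum>i = Suc b..v. (Nf v n i + 2) * Nf v n i)"
      by (rule sum.cong) (auto simp: NS)
    finally show ?thesis unfolding NbM by (simp add: algebra_simps)
  qed
  have prodeq: "(\<Prod>i = b..v - 1. qpoch q q (n' i)) = qpoch q q (M - t) * (\<Prod>i = Suc b..v - 1. qpoch q q (n i))"
  proof -
    have "(\<Prod>i = b..v - 1. qpoch q q (n' i)) = qpoch q q (n' b) * (\<Prod>i = Suc b..v - 1. qpoch q q (n' i))"
      using bv by (intro prod.atLeast_Suc_atMost) simp
    also have "(\<Prod>i = Suc b..v - 1. qpoch q q (n' i)) = (\<Prod>i = Suc b..v - 1. qpoch q q (n i))"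
      by (rule prod.cong) (auto simp: n'_def)
    finally show ?thesis by (simp add: n'_def)
  qed
  show ?thesis
    unfolding n'_def[symmetric] Wt_def sumeq prodeq nv
    by (simp add: power_add divide_inverse inverse_mult_distrib mult_ac)
qed

lemma G_step:
  assumes bv: "Suc b \<le> v"
  shows "G q v b M = q^(M*M+2*M) * (\<Sum>t=0..M. ip q (int M - int t) * G q v (Suc b) t)"
proof -
  define h where "h = (\<lambda>(t, n). q^(M*M+2*M) * (1 / qpoch q q (M - t)) * Wt q v (Suc b) n)"
  define T where "T = Sigma {0..M} (\<lambda>t. Sset v (Suc b) t)"
  have fin: "finite {0..M}" "\<forall>t\<in>{0..M}. finite (Sset v (Suc b) t)" by (auto simp: finite_Sset)
  have "q^(M*M+2*M) * (\<Sum>t=0..M. ip q (int M - int t) * G q v (Suc b) t)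
      = (\<Sum>t=0..M. \<Sum>n\<in>Sset v (Suc b) t. q^(M*M+2*M) * (1 / qpoch q q (M - t)) * Wt q v (Suc b) n)"
    unfolding G_def sum_distrib_left
  proof (rule sum.cong[OF refl])
    fix t assume "t \<in> {0..M}"
    then have "ip q (int M - int t) = 1 / qpoch q q (M - t)" using ip_nat[of q "M - t"] by (simp add: of_nat_diff)
    then show "(\<Sum>n\<in>Sset v (Suc b) t. q^(M*M+2*M) * (ip q (int M - int t) * Wt q v (Suc b) n))
        = (\<Sum>n\<in>Sset v (Suc b) t. q^(M*M+2*M) * (1 / qpoch q q (M - t)) * Wt q v (Suc b) n)"
      by (simp add: mult.assoc)
  qed
  also have "\<dots> = sum h T"
    unfolding T_def h_def by (rule sum.Sigma[OF fin])
  finally have R: "q^(M*M+2*M) * (\<Sum>t=0..M. ip q (int M - int t) * G q v (Suc b) t) = sum h T" .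
  have bv': "b \<le> v" using bv by simp
  define ii where "ii = (\<lambda>(t::nat, n::nat\<Rightarrow>nat). n(b := M - t))"
  define jj where "jj = (\<lambda>n::nat\<Rightarrow>nat. (Nf v n (Suc b), n(b := 0)))"
  have w1: "ii (jj n) = n" and w2: "jj n \<in> T" and w5: "h (jj n) = Wt q v b n" if n: "n \<in> Sset v b M" for n
  proof -
    have nb: "Nf v n b = M" "\<And>i. i \<notin> {b..v} \<Longrightarrow> n i = 0" using n unfolding Sset_def by auto
    have sp: "Nf v n b = n b + Nf v n (Suc b)" by (rule Nf_split[OF bv'])
    show e1: "ii (jj n) = n" unfolding ii_def jj_def using nb sp by auto
    have u: "Nf v (n(b := 0)) (Suc b) = Nf v n (Suc b)" by (rule Nf_upd) simp
    moreover have "\<forall>i. i \<notin> {Suc b..v} \<longrightarrow> (n(b := 0)) i = 0" using nb(2) by auto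
    moreover have le: "Nf v n (Suc b) \<le> M" using nb sp by simp
    ultimately show "jj n \<in> T" unfolding T_def Sset_def jj_def by auto
    have "h (jj n) = Wt q v b ((n(b := 0))(b := M - Nf v n (Suc b)))"
      unfolding h_def jj_def using Wt_step[OF bv le u, of q]
      by simp
    also have "(n(b := 0))(b := M - Nf v n (Suc b)) = n" using e1 unfolding ii_def jj_def by simp
    finally show "h (jj n) = Wt q v b n" .
  qed
  have w3: "jj (ii p) = p" and w4: "ii p \<in> Sset v b M" if p: "p \<in> T" for p
  proof -
    obtain t n where pe: "p = (t, n)" by (cases p)
    have t: "t \<le> M" and nt: "Nf v n (Suc b) = t" and ns: "\<And>i. i \<notin> {Suc b..v} \<Longrightarrow> n i = 0"
      using p unfolding pe T_def Sset_def by auto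
    have n0: "n b = 0" using ns by simp
    have u: "Nf v (n(b := M - t)) (Suc b) = Nf v n (Suc b)" by (rule Nf_upd) simp
    show "jj (ii p) = p" unfolding pe ii_def jj_def using u nt n0 by (auto intro!: ext)
    have "Nf v (n(b := M - t)) b = (M - t) + Nf v (n(b := M - t)) (Suc b)" using Nf_split[OF bv'] by simp
    then have "Nf v (n(b := M - t)) b = M" using u nt t by simp
    moreover have "\<forall>i. i \<notin> {b..v} \<longrightarrow> (n(b := M - t)) i = 0" using ns bv' by auto
    ultimately show "ii p \<in> Sset v b M" unfolding pe ii_def Sset_def by auto
  qed
  have "G q v b M = sum h T"
    unfolding G_def by (rule sum.reindex_bij_witness[of _ ii jj]) (auto intro: w1 w2 w3 w4 w5)
  then show ?thesis using R by simp
qed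

lemma alpha0: "alpha q 0 = 0" by (simp add: alpha_def Legendre3)

context fixes q :: complex and v :: nat assumes q1: "norm q < 1" and v1: "v \<ge> 1"
begin

lemma chain_base:
  "(1 + q + q^2) * G q v v m = q^(m*m+2*m) * (\<Sum>j=-(int m+1)..int m+1. alpha q j * ip q (int m+1-j) * ip q (int m+1+j))"
proof -
  have "ip q (int (2*m+2)) = 1 / qpoch q q (2*m+2)" by (rule ip_nat)
  moreover have "q^((m + 2) * m + m) = q^(m*m+2*m) * q^m"
  proof -
    have "(m + 2) * m + m = (m*m+2*m) + m" by (simp add: algebra_simps)
    then show ?thesis by (simp only: power_add)
  qed
  ultimately have "(1 + q + q^2) * G q v v m = q^(m*m+2*m) * ((1 + q + q^2) * (q^m * (1 - q^(Suc m)) * (qpoch (-1) (q^3) m / qpoch (-1) q m) * ip q (int (2*m+2))))"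
    unfolding G_base[OF v1] by (simp add: mult_ac)
  then show ?thesis unfolding seed[OF q1] .
qed

lemma chain:
  "d < v \<Longrightarrow> (\<Sum>m=0..n. ip q (int n - int m) * ((1 + q + q^2) * G q v (v - d) m))
     = (\<Sum>j=-(int n+1)..int n+1. q^(Suc d * nat (j^2-1)) * alpha q j * ip q (int n+1-j) * ip q (int n+1+j))"
proof (induction d arbitrary: n)
  case 0
  have "(\<Sum>m=0..n. ip q (int n - int m) * ((1 + q + q^2) * G q v (v - 0) m))
      = (\<Sum>m=0..n. q^(m*m+2*m) * ip q (int n - int m) * (\<Sum>j=-(int m+1)..int m+1. alpha q j * ip q (int m+1-j) * ip q (int m+1+j)))"
  proof (rule sum.cong[OF refl])
    fix m
    have h: "(1 + q + q^2) * G q v (v - 0) m = q^(m*m+2*m) * (\<Sum>j=-(int m+1)..int m+1. alpha q j * ip q (int m+1-j) * ip q (int m+1+j))"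
      using chain_base[of m] by simp
    show "ip q (int n - int m) * ((1 + q + q^2) * G q v (v - 0) m)
      = q^(m*m+2*m) * ip q (int n - int m) * (\<Sum>j=-(int m+1)..int m+1. alpha q j * ip q (int m+1-j) * ip q (int m+1+j))"
      unfolding h by (simp only: mult_ac)
  qed
  also have "\<dots> = (\<Sum>j=-(int n+1)..int n+1. q^(nat (j^2-1)) * alpha q j * ip q (int n+1-j) * ip q (int n+1+j))"
    by (rule Bailey_step[where \<alpha>="alpha q", OF q1 alpha0])
  finally show ?case by simp
next
  case (Suc d)
  define b where "b = v - Suc d"
  have bs: "Suc b = v - d" "Suc b \<le> v" using Suc.prems unfolding b_def by auto
  have "(\<Sum>m=0..n. ip q (int n - int m) * ((1 + q + q^2) * G q v (v - Suc d) m))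
      = (\<Sum>m=0..n. q^(m*m+2*m) * ip q (int n - int m) * (\<Sum>t=0..m. ip q (int m - int t) * ((1 + q + q^2) * G q v (v - d) t)))"
  proof (rule sum.cong[OF refl])
    fix m
    show "ip q (int n - int m) * ((1 + q + q^2) * G q v (v - Suc d) m)
        = q^(m*m+2*m) * ip q (int n - int m) * (\<Sum>t=0..m. ip q (int m - int t) * ((1 + q + q^2) * G q v (v - d) t))"
      unfolding b_def[symmetric] G_step[OF bs(2)] bs(1)
      by (simp add: sum_distrib_left mult_ac)
  qed
  also have "\<dots> = (\<Sum>m=0..n. q^(m*m+2*m) * ip q (int n - int m) *
       (\<Sum>j=-(int m+1)..int m+1. (q^(Suc d * nat (j^2-1)) * alpha q j) * ip q (int m+1-j) * ip q (int m+1+j)))"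
    using Suc.IH Suc.prems by simp
  also have "\<dots> = (\<Sum>j=-(int n+1)..int n+1. q^(nat (j^2-1)) * (q^(Suc d * nat (j^2-1)) * alpha q j) * ip q (int n+1-j) * ip q (int n+1+j))"
    by (rule Bailey_step[OF q1]) (simp add: alpha0)
  also have "\<dots> = (\<Sum>j=-(int n+1)..int n+1. q^(Suc (Suc d) * nat (j^2-1)) * alpha q j * ip q (int n+1-j) * ip q (int n+1+j))"
    by (rule sum.cong[OF refl]) (simp add: power_add mult_ac)
  finally show ?case .
qed

end

lemma ip_int: "0 \<le> x \<Longrightarrow> ip q x = 1 / qpoch q q (nat x)"
  by (simp add: qfact_inv_def)

lemma expo:
  assumes "j \<noteq> 0"
  shows "((2 * int v + 1) * j ^ 2 - 3 * j) div 2 - (int v - 1) = int (v * nat (j^2 - 1) + nat (ee j))"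
proof -
  have j1: "j^2 \<ge> 1" using assms by (simp add: power2_eq_square) (metis abs_mult_self_eq abs_ge_zero zero_less_abs_iff mult_le_cancel_left1 not_le int_one_le_iff_zero_less abs_mult abs_one linorder_not_less mult_cancel_left2 nle_le)
  have a: "(2 * int v + 1) * j ^ 2 - 3 * j = (j-1)*(j-2) + 2 * (int v * j^2 - 1)"
    by (simp add: algebra_simps power2_eq_square)
  have b: "((j-1)*(j-2) + 2 * (int v * j^2 - 1)) div 2 = ee j + (int v * j^2 - 1)"
    unfolding ee_def by presburger
  have c: "int (v * nat (j^2 - 1) + nat (ee j)) = int v * (j^2 - 1) + ee j"
  proof -
    have h1: "int (nat (j^2 - 1)) = j^2 - 1" using j1 assms by (intro nat_0_le) simp
    have h2: "int (nat (ee j)) = ee j" using ee_nonneg[of j] by simp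
    show ?thesis unfolding of_nat_add of_nat_mult h1 h2 ..
  qed
  show ?thesis unfolding a b c by (simp add: algebra_simps)
qed

theorem mainTheorem7:
  fixes q :: complex and v L :: nat
  assumes "norm q < 1" and "v \<ge> 1"
  shows "(1 - q ^ 3) / (1 - q) *
     (\<Sum>\<^sub>\<infinity> n \<in> {n :: nat \<Rightarrow> nat. \<forall>i. i \<notin> {1..v} \<longrightarrow> n i = 0}.
        (let N = (\<lambda>i. \<Sum>k = i..v. n k) in
          q ^ ((\<Sum>i = 1..v. (N i + 2) * N i) + n v)
          / ((\<Prod>i = 1..v - 1. qpoch q q (n i)) * qpoch q q (2 * n v + 2))
          * (qpoch (-1) (q ^ 3) (n v) / qpoch (-1) q (n v))
          * (1 - q ^ (1 + n v))
          * qpoch q q (2 * L) * qfact_inv q (int L - 1 - int (N 1))))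
   = (\<Sum>\<^sub>\<infinity> j :: int.
        of_int (Legendre j 3)
        * q powi (((2 * int v + 1) * j ^ 2 - 3 * j) div 2 - (int v - 1))
        * qbinom q (2 * int L) (int L + j))"
proof -
  have q1: "norm q < 1" and v1: "v \<ge> 1" using assms by auto
  have qne1: "1 - q \<noteq> 0" using one_minus_pow_nz[OF q1, of 0] by simp
  have C: "(1 - q ^ 3) / (1 - q) = 1 + q + q^2"
  proof -
    have "1 - q^3 = (1 - q) * (1 + q + q^2)" by (simp add: algebra_simps power2_eq_square power3_eq_cube)
    then show ?thesis using qne1 by simp
  qed
  define X where "X = {n :: nat \<Rightarrow> nat. \<forall>i. i \<notin> {1..v} \<longrightarrow> n i = 0}"
  define s' where "s' n = Wt q v 1 n * qpoch q q (2*L) * ip q (int L - 1 - int (Nf v n 1))" for n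
  define g where "g j = of_int (Legendre j 3)
        * q powi (((2 * int v + 1) * j ^ 2 - 3 * j) div 2 - (int v - 1))
        * qbinom q (2 * int L) (int L + j)" for j
  have LS: "(\<Sum>\<^sub>\<infinity> n \<in> {n :: nat \<Rightarrow> nat. \<forall>i. i \<notin> {1..v} \<longrightarrow> n i = 0}.
        (let N = (\<lambda>i. \<Sum>k = i..v. n k) in
          q ^ ((\<Sum>i = 1..v. (N i + 2) * N i) + n v)
          / ((\<Prod>i = 1..v - 1. qpoch q q (n i)) * qpoch q q (2 * n v + 2))
          * (qpoch (-1) (q ^ 3) (n v) / qpoch (-1) q (n v))
          * (1 - q ^ (1 + n v))
          * qpoch q q (2 * L) * qfact_inv q (int L - 1 - int (N 1)))) = (\<Sum>\<^sub>\<infinity> n\<in>X. s' n)"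
    unfolding X_def s'_def by (rule infsum_cong) (simp only: Let_def Wt_def Nf_def)
  have RS: "(\<Sum>\<^sub>\<infinity> j :: int.
        of_int (Legendre j 3)
        * q powi (((2 * int v + 1) * j ^ 2 - 3 * j) div 2 - (int v - 1))
        * qbinom q (2 * int L) (int L + j)) = (\<Sum>\<^sub>\<infinity> j::int. g j)"
    unfolding g_def ..
  show ?thesis
  proof (cases L)
    case 0
    have "s' n = 0" for n unfolding s'_def 0 by (simp add: ip_neg)
    then have l0: "(\<Sum>\<^sub>\<infinity> n\<in>X. s' n) = 0" by (simp add: infsum_0)
    have "g j = 0" for j
    proof (cases "j = 0")
      case True then show ?thesis unfolding g_def by (simp add: Legendre3)
    next
      case False
      then have "\<not> (0 \<le> int L + j \<and> int L + j \<le> 2 * int L)" unfolding 0 by auto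
      then have "qbinom q (2 * int L) (int L + j) = 0" unfolding qbinom_def by (simp only: if_False)
      then show ?thesis unfolding g_def by simp
    qed
    then have r0: "(\<Sum>\<^sub>\<infinity> j::int. g j) = 0" by (simp add: infsum_0)
    show ?thesis unfolding LS RS l0 r0 by simp
  next
    case (Suc n0)
    define F where "F = {n \<in> X. Nf v n 1 \<le> n0}"
    have finF: "finite F"
    proof -
      have "F \<subseteq> {n :: nat \<Rightarrow> nat. (\<forall>i. i \<notin> {1..v} \<longrightarrow> n i = 0) \<and> (\<forall>i \<in> {1..v}. n i \<le> n0)}"
      proof
        fix n assume n: "n \<in> F"
        then have a: "\<forall>i. i \<notin> {1..v} \<longrightarrow> n i = 0" and b: "Nf v n 1 \<le> n0" unfolding F_def X_def by auto
        have "\<forall>i\<in>{1..v}. n i \<le> n0" using le_Nf[of _ 1 v n] b le_trans by blast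
        then show "n \<in> {n :: nat \<Rightarrow> nat. (\<forall>i. i \<notin> {1..v} \<longrightarrow> n i = 0) \<and> (\<forall>i \<in> {1..v}. n i \<le> n0)}"
          using a by simp
      qed
      then show ?thesis using finite_funs_bounded finite_subset by blast
    qed
    have "(\<Sum>\<^sub>\<infinity> n\<in>X. s' n) = (\<Sum>\<^sub>\<infinity> n\<in>F. s' n)"
    proof (rule infsum_cong_neutral)
      fix x assume "x \<in> X - F"
      then have "int L - 1 - int (Nf v x 1) < 0" unfolding F_def Suc by auto
      then show "s' x = 0" unfolding s'_def by (simp add: ip_neg)
    qed (auto simp: F_def)
    also have "\<dots> = sum s' F" using finF by simp
    also have "\<dots> = (\<Sum>m=0..n0. sum s' {x \<in> F. Nf v x 1 = m})"
      by (rule sum.group[symmetric, OF finF]) (auto simp: F_def)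
    also have "\<dots> = (\<Sum>m=0..n0. qpoch q q (2*L) * (ip q (int n0 - int m) * G q v 1 m))"
    proof (rule sum.cong[OF refl])
      fix m assume m: "m \<in> {0..n0}"
      have "{x \<in> F. Nf v x 1 = m} = Sset v 1 m" unfolding F_def X_def Sset_def using m by auto
      moreover have "s' x = qpoch q q (2*L) * (ip q (int n0 - int m) * Wt q v 1 x)" if "x \<in> Sset v 1 m" for x
        using that unfolding s'_def Sset_def Suc by (simp add: mult_ac)
      ultimately show "sum s' {x \<in> F. Nf v x 1 = m} = qpoch q q (2*L) * (ip q (int n0 - int m) * G q v 1 m)"
        unfolding G_def by (simp add: sum_distrib_left)
    qed
    finally have L1: "(\<Sum>\<^sub>\<infinity> n\<in>X. s' n) = (\<Sum>m=0..n0. qpoch q q (2*L) * (ip q (int n0 - int m) * G q v 1 m))" .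
    have "(1 + q + q^2) * (\<Sum>\<^sub>\<infinity> n\<in>X. s' n) = qpoch q q (2*L) * (\<Sum>m=0..n0. ip q (int n0 - int m) * ((1 + q + q^2) * G q v (v - (v - 1)) m))"
      unfolding L1 using v1 by (simp add: sum_distrib_left mult_ac)
    also have "\<dots> = qpoch q q (2*L) * (\<Sum>j=-(int n0+1)..int n0+1. q^(Suc (v - 1) * nat (j^2-1)) * alpha q j * ip q (int n0+1-j) * ip q (int n0+1+j))"
      using chain[OF q1 v1, of "v - 1" n0] v1 by simp
    finally have LL: "(1 + q + q^2) * (\<Sum>\<^sub>\<infinity> n\<in>X. s' n) = qpoch q q (2*L) * (\<Sum>j=-(int n0+1)..int n0+1. q^(v * nat (j^2-1)) * alpha q j * ip q (int n0+1-j) * ip q (int n0+1+j))"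
      using v1 by simp
    have gz: "g j = 0" if "j \<notin> {-(int n0+1)..int n0+1}" for j
    proof -
      have "\<not> (0 \<le> int L + j \<and> int L + j \<le> 2 * int L)" using that unfolding Suc by auto
      then have "qbinom q (2 * int L) (int L + j) = 0" unfolding qbinom_def by (simp only: if_False)
      then show ?thesis unfolding g_def by simp
    qed
    have "(\<Sum>\<^sub>\<infinity> j::int. g j) = (\<Sum>\<^sub>\<infinity> j\<in>{-(int n0+1)..int n0+1}. g j)"
      by (rule infsum_cong_neutral) (auto simp: gz)
    also have "\<dots> = (\<Sum>j=-(int n0+1)..int n0+1. g j)" by simp
    also have "\<dots> = (\<Sum>j=-(int n0+1)..int n0+1. qpoch q q (2*L) * (q^(v * nat (j^2-1)) * alpha q j * ip q (int n0+1-j) * ip q (int n0+1+j)))"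
    proof (rule sum.cong[OF refl])
      fix j assume j: "j \<in> {-(int n0+1)..int n0+1}"
      show "g j = qpoch q q (2*L) * (q^(v * nat (j^2-1)) * alpha q j * ip q (int n0+1-j) * ip q (int n0+1+j))"
      proof (cases "j = 0")
        case True then show ?thesis unfolding g_def alpha_def by (simp add: Legendre3)
      next
        case False
        have pw: "q powi (((2 * int v + 1) * j ^ 2 - 3 * j) div 2 - (int v - 1)) = q^(v * nat (j^2-1)) * q^(nat (ee j))"
          unfolding expo[OF False] power_int_of_nat by (simp add: power_add)
        have e1: "int n0 + 1 - j = int L - j" "int n0 + 1 + j = int L + j" using Suc by simp_all
        have i1: "ip q (int n0+1-j) = 1 / qpoch q q (nat (int L - j))" unfolding e1 using j Suc by (intro ip_int) auto
        have i2: "ip q (int n0+1+j) = 1 / qpoch q q (nat (int L + j))" unfolding e1 using j Suc by (intro ip_int) auto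
        have qb: "qbinom q (2 * int L) (int L + j) = qpoch q q (2*L) / (qpoch q q (nat (int L + j)) * qpoch q q (nat (int L - j)))"
        proof -
          have c: "0 \<le> int L + j \<and> int L + j \<le> 2 * int L" using j Suc by auto
          have d: "nat (2 * int L) = 2*L" "2 * int L - (int L + j) = int L - j" by simp_all
          show ?thesis unfolding qbinom_def if_P[OF c] d ..
        qed
        show ?thesis unfolding g_def pw i1 i2 qb alpha_def
          by (simp only: divide_inverse inverse_mult_distrib mult_1_left mult_ac)
      qed
    qed
    also have "\<dots> = qpoch q q (2*L) * (\<Sum>j=-(int n0+1)..int n0+1. q^(v * nat (j^2-1)) * alpha q j * ip q (int n0+1-j) * ip q (int n0+1+j))"
      by (simp add: sum_distrib_left)
    finally have RR: "(\<Sum>\<^sub>\<infinity> j::int. g j) = qpoch q q (2*L) * (\<Sum>j=-(int n0+1)..int n0+1. q^(v * nat (j^2-1)) * alpha q j * ip q (int n0+1-j) * ip q (int n0+1+j))" .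
    show ?thesis unfolding LS RS C LL RR ..
  qed
qed


end
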